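(* Let $\varphi\in\mathbb{B}$. Then for every fixed $x\in\mathbb{R}$, the function $y\mapsto\varphi(x+iy)$ belongs to $L^2(\mathbb{R},e^{-y^2}dy)$, i.e. $\int_{\mathbb{R}}|\varphi(x+iy)|^2e^{-y^2}\,dy<\infty$.
   Context: The Bargmann space is $\mathbb{B}=\{\varphi:\mathbb{C}\to\mathbb{C}\text{ entire};\ \int_{\mathbb{C}}|\varphi(z)|^2e^{-|z|^2}\,dx\,dy<\infty\}$, $z=x+iy$. *)

theory Defs
  imports "HOL-Complex_Analysis.Complex_Analysis"
begin

definition Bargmann :: "(complex \<Rightarrow> complex) set" where
  "Bargmann = {\<phi>. \<phi> holomorphic_on UNIV \<and>
      integrable lborel (\<lambda>z::complex. (cmod (\<phi> z))\<^sup>2 * exp (- (cmod z)\<^sup>2))}"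

end

theory Submission
  imports Defs
begin


lemma measurable_Complex[measurable (raw)]:
  "f \<in> borel_measurable M \<Longrightarrow> g \<in> borel_measurable M \<Longrightarrow> (\<lambda>x. Complex (f x) (g x)) \<in> borel_measurable M"
  unfolding Complex_eq by (intro borel_measurable_add borel_measurable_times) auto


lemma lborel_complex:
  "(lborel :: complex measure) = distr (lborel \<Otimes>\<^sub>M lborel) borel (\<lambda>(a,b). Complex a b)"
proof (rule lborel_eqI)
  fix l u :: complex
  assume le: "\<And>b. b \<in> Basis \<Longrightarrow> l \<bullet> b \<le> u \<bullet> b"
  have "Re l \<le> Re u" "Im l \<le> Im u" using le[of 1] le[of \<i>] by (auto simp: Basis_complex_def)
  have eq: "(\<lambda>(a,b). Complex a b) -` box l u \<inter> space (lborel \<Otimes>\<^sub>M lborel) = {Re l<..<Re u} \<times> {Im l<..<Im u}"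
    by (auto simp: in_box_complex_iff space_pair_measure)
  have m: "(\<lambda>(a,b). Complex a b) \<in> measurable (lborel \<Otimes>\<^sub>M lborel) borel"
    by measurable
  show "emeasure (distr (lborel \<Otimes>\<^sub>M lborel) borel (\<lambda>(a,b). Complex a b)) (box l u) = (\<Prod>b\<in>Basis. (u - l) \<bullet> b)"
    using \<open>Re l \<le> Re u\<close> \<open>Im l \<le> Im u\<close>
    by (simp add: emeasure_distr[OF m] eq lborel.emeasure_pair_measure_Times Basis_complex_def ennreal_mult)
qed simp

lemma side_bound:
  fixes f :: "complex \<Rightarrow> complex"
  assumes contf: "continuous_on UNIV f" and dist: "\<And>t. t\<in>{0..1} \<Longrightarrow> s \<le> cmod (linepath a b t - z)"
    and s: "s > 0" and ba: "cmod (b - a) = 2 * s"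
  shows "\<exists>J. ((\<lambda>w. f w/(w-z)) has_contour_integral J) (linepath a b) \<and>
           cmod J \<le> 2 * integral {0..1} (\<lambda>t. cmod (f (linepath a b t)))"
proof -
  have zn: "z \<notin> closed_segment a b"
  proof
    assume "z \<in> closed_segment a b"
    then obtain t where t: "t \<in> {0..1}" "z = linepath a b t"
      by (metis imageE path_image_def path_image_linepath)
    show False using dist[OF t(1)] t(2) s by simp
  qed
  have cont: "continuous_on (closed_segment a b) (\<lambda>w. f w/(w-z))"
    using zn by (intro continuous_intros continuous_on_subset[OF contf]) auto
  define I where "I = contour_integral (linepath a b) (\<lambda>w. f w/(w-z))"
  have hI: "((\<lambda>w. f w/(w-z)) has_contour_integral I) (linepath a b)"
    unfolding I_def using contour_integrable_continuous_linepath[OF cont]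
    by (rule has_contour_integral_integral)
  then have hI2: "((\<lambda>t. f (linepath a b t) / (linepath a b t - z) * (b - a)) has_integral I) {0..1}"
    by (simp add: has_contour_integral_linepath)
  have contl: "continuous_on {0..1} (\<lambda>t. 2 * cmod (f (linepath a b t)))"
    by (intro continuous_intros continuous_on_compose2[OF contf]) auto
  have "cmod I = cmod (integral {0..1} (\<lambda>t. f (linepath a b t) / (linepath a b t - z) * (b - a)))"
    using hI2 by (simp add: integral_unique)
  also have "\<dots> \<le> integral {0..1} (\<lambda>t. 2 * cmod (f (linepath a b t)))"
  proof (rule integral_norm_bound_integral)
    show "(\<lambda>t. f (linepath a b t) / (linepath a b t - z) * (b - a)) integrable_on {0..1}"
      using hI2 by blast
    show "(\<lambda>t. 2 * cmod (f (linepath a b t))) integrable_on {0..1}"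
      using contl by (rule integrable_continuous_interval)
    fix t :: real assume t: "t \<in> {0..1}"
    have d: "s \<le> cmod (linepath a b t - z)" using dist[OF t] .
    have "cmod (f (linepath a b t) / (linepath a b t - z) * (b - a))
          = cmod (f (linepath a b t)) * (2 * s) / cmod (linepath a b t - z)"
      by (simp add: norm_mult norm_divide ba)
    also have "\<dots> \<le> cmod (f (linepath a b t)) * (2 * s) / s"
      using d s by (intro divide_left_mono) (auto intro!: mult_pos_pos)
    also have "\<dots> = 2 * cmod (f (linepath a b t))" using s by simp
    finally show "cmod (f (linepath a b t) / (linepath a b t - z) * (b - a)) \<le> 2 * cmod (f (linepath a b t))" .
  qed
  also have "\<dots> = 2 * integral {0..1} (\<lambda>t. cmod (f (linepath a b t)))"
    by simp
  finally show ?thesis using hI by blast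
qed


lemma rect_bound:
  fixes f :: "complex \<Rightarrow> complex"
  assumes holf: "f holomorphic_on UNIV" and s: "s > 0"
  shows "cmod (f (Complex x y)) \<le> (1/pi) *
     (integral {0..1} (\<lambda>t. cmod (f (Complex (x - s + 2 * s * t) (y - s)))) +
      (integral {0..1} (\<lambda>t. cmod (f (Complex (x + s) (y - s + 2 * s * t)))) +
      (integral {0..1} (\<lambda>t. cmod (f (Complex (x + s - 2 * s * t) (y + s)))) +
       integral {0..1} (\<lambda>t. cmod (f (Complex (x - s) (y + s - 2 * s * t)))))))"
proof -
  define z where "z = Complex x y"
  define a1 where "a1 = Complex (x - s) (y - s)"
  define a2 where "a2 = Complex (x + s) (y - s)"
  define a3 where "a3 = Complex (x + s) (y + s)"
  define a4 where "a4 = Complex (x - s) (y + s)"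
  have contf: "continuous_on UNIV f" using holf holomorphic_on_imp_continuous_on by blast
  have l1: "linepath a1 a2 t = Complex (x - s + 2 * s * t) (y - s)" for t
    by (simp add: linepath_def a1_def a2_def complex_eq_iff algebra_simps)
  have l2: "linepath a2 a3 t = Complex (x + s) (y - s + 2 * s * t)" for t
    by (simp add: linepath_def a3_def a2_def complex_eq_iff algebra_simps)
  have l3: "linepath a3 a4 t = Complex (x + s - 2 * s * t) (y + s)" for t
    by (simp add: linepath_def a3_def a4_def complex_eq_iff algebra_simps)
  have l4: "linepath a4 a1 t = Complex (x - s) (y + s - 2 * s * t)" for t
    by (simp add: linepath_def a1_def a4_def complex_eq_iff algebra_simps)
  have cdiff: "Complex a b - Complex c d = Complex (a - c) (b - d)" for a b c d
    by (simp add: complex_eq_iff)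
  have sq: "sqrt (4 * s\<^sup>2) = 2 * s"
    using s by (simp add: real_sqrt_mult)
  have imd: "s \<le> cmod (w - z)" if "\<bar>Im w - y\<bar> = s" for w
    using abs_Im_le_cmod[of "w - z"] that by (simp add: z_def)
  have red: "s \<le> cmod (w - z)" if "\<bar>Re w - x\<bar> = s" for w
    using abs_Re_le_cmod[of "w - z"] that by (simp add: z_def)
  have "\<exists>J. ((\<lambda>w. f w/(w-z)) has_contour_integral J) (linepath a1 a2) \<and>
           cmod J \<le> 2 * integral {0..1} (\<lambda>t. cmod (f (linepath a1 a2 t)))"
  proof (rule side_bound[OF contf _ s])
    fix t show "s \<le> cmod (linepath a1 a2 t - z)" using s by (intro imd) (simp add: l1)
  next
    show "cmod (a2 - a1) = 2 * s" using s by (simp add: a1_def a2_def a3_def a4_def complex_norm cdiff sq)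
  qed
  then obtain J1 where J1: "((\<lambda>w. f w/(w-z)) has_contour_integral J1) (linepath a1 a2)"
     "cmod J1 \<le> 2 * integral {0..1} (\<lambda>t. cmod (f (linepath a1 a2 t)))" by blast
  have "\<exists>J. ((\<lambda>w. f w/(w-z)) has_contour_integral J) (linepath a2 a3) \<and>
           cmod J \<le> 2 * integral {0..1} (\<lambda>t. cmod (f (linepath a2 a3 t)))"
  proof (rule side_bound[OF contf _ s])
    fix t show "s \<le> cmod (linepath a2 a3 t - z)" using s by (intro red) (simp add: l2)
  next
    show "cmod (a3 - a2) = 2 * s" using s by (simp add: a1_def a2_def a3_def a4_def complex_norm cdiff sq)
  qed
  then obtain J2 where J2: "((\<lambda>w. f w/(w-z)) has_contour_integral J2) (linepath a2 a3)"
     "cmod J2 \<le> 2 * integral {0..1} (\<lambda>t. cmod (f (linepath a2 a3 t)))" by blast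
  have "\<exists>J. ((\<lambda>w. f w/(w-z)) has_contour_integral J) (linepath a3 a4) \<and>
           cmod J \<le> 2 * integral {0..1} (\<lambda>t. cmod (f (linepath a3 a4 t)))"
  proof (rule side_bound[OF contf _ s])
    fix t show "s \<le> cmod (linepath a3 a4 t - z)" using s by (intro imd) (simp add: l3)
  next
    show "cmod (a4 - a3) = 2 * s" using s by (simp add: a1_def a2_def a3_def a4_def complex_norm cdiff sq)
  qed
  then obtain J3 where J3: "((\<lambda>w. f w/(w-z)) has_contour_integral J3) (linepath a3 a4)"
     "cmod J3 \<le> 2 * integral {0..1} (\<lambda>t. cmod (f (linepath a3 a4 t)))" by blast
  have "\<exists>J. ((\<lambda>w. f w/(w-z)) has_contour_integral J) (linepath a4 a1) \<and>
           cmod J \<le> 2 * integral {0..1} (\<lambda>t. cmod (f (linepath a4 a1 t)))"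
  proof (rule side_bound[OF contf _ s])
    fix t show "s \<le> cmod (linepath a4 a1 t - z)" using s by (intro red) (simp add: l4)
  next
    show "cmod (a1 - a4) = 2 * s" using s by (simp add: a1_def a2_def a3_def a4_def complex_norm cdiff sq)
  qed
  then obtain J4 where J4: "((\<lambda>w. f w/(w-z)) has_contour_integral J4) (linepath a4 a1)"
     "cmod J4 \<le> 2 * integral {0..1} (\<lambda>t. cmod (f (linepath a4 a1 t)))" by blast
  have rp: "rectpath a1 a3 = linepath a1 a2 +++ linepath a2 a3 +++ linepath a3 a4 +++ linepath a4 a1"
    by (simp add: rectpath_def Let_def a1_def a2_def a3_def a4_def)
  have hJ: "((\<lambda>w. f w/(w-z)) has_contour_integral (J1 + (J2 + (J3 + J4)))) (rectpath a1 a3)"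
    unfolding rp
    by (intro has_contour_integral_join J1(1) J2(1) J3(1) J4(1) valid_path_join valid_path_linepath) auto
  have zb: "z \<in> box a1 a3" using s by (simp add: in_box_complex_iff z_def a1_def a3_def)
  have "z \<notin> path_image (rectpath a1 a3)"
    using path_image_rectpath_inter_box[of a1 a3] zb s by (auto simp: a1_def a3_def)
  then have hC: "((\<lambda>w. f w/(w-z)) has_contour_integral (2*pi * \<i> * winding_number (rectpath a1 a3) z * f z)) (rectpath a1 a3)"
    by (intro Cauchy_integral_formula_convex_simple[OF convex_UNIV holf]) auto
  have "2*pi * \<i> * f z = J1 + (J2 + (J3 + J4))"
    using has_contour_integral_unique[OF hC hJ] winding_number_rectpath[OF zb] by simp
  then have "2*pi * cmod (f z) = cmod (J1 + (J2 + (J3 + J4)))"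
    by (metis norm_mult norm_ii norm_of_real mult_1_right abs_of_nonneg pi_ge_zero mult_nonneg_nonneg zero_le_numeral norm_numeral mult.assoc of_real_mult of_real_numeral mult.commute)
  also have "\<dots> \<le> cmod J1 + (cmod J2 + (cmod J3 + cmod J4))"
    by (meson add_mono norm_triangle_ineq order_trans order_refl)
  finally show ?thesis
    using J1(2) J2(2) J3(2) J4(2) pi_gt_zero by (simp add: z_def field_simps l1 l2 l3 l4)
qed



lemma nn_trans:
  fixes g :: "real \<Rightarrow> ennreal"
  assumes [measurable]: "g \<in> borel_measurable borel"
  shows "(\<integral>\<^sup>+y. g (y + c) \<partial>lborel) = (\<integral>\<^sup>+y. g y \<partial>lborel)"
  using nn_integral_real_affine[of g 1 c] by (simp add: add.commute)

lemma nn_aff: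
  fixes g :: "real \<Rightarrow> ennreal"
  assumes [measurable]: "g \<in> borel_measurable borel" and c: "c \<noteq> 0"
  shows "ennreal \<bar>c\<bar> * (\<integral>\<^sup>+t. g (a + c * t) * indicator {0..1} t \<partial>lborel)
       = (\<integral>\<^sup>+u. g u * indicator {min a (a+c)..max a (a+c)} u \<partial>lborel)"
proof -
  have ind: "indicator {min a (a+c)..max a (a+c)} (a + c * t) = (indicator {0..1} t :: ennreal)" for t
  proof (cases "c > 0")
    case True
    then show ?thesis by (auto simp: indicator_def min_def max_def zero_le_mult_iff mult_le_cancel_left1 mult_le_cancel_left)
  next
    case False
    then have "c < 0" using c by simp
    then show ?thesis by (auto simp: indicator_def min_def max_def zero_le_mult_iff mult_le_cancel_left1 mult_le_cancel_left mult_le_0_iff)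
  qed
  show ?thesis
    by (subst nn_integral_real_affine[OF _ c, of _ a]) (simp_all add: ind)
qed


lemma continuous_on_Complex_comp:
  assumes "continuous_on UNIV Q" "continuous_on S f" "continuous_on S g"
  shows "continuous_on S (\<lambda>t. Q (Complex (f t) (g t)))"
  unfolding Complex_eq
  by (rule continuous_on_compose2[OF assms(1)]) (intro continuous_intros assms(2,3), auto)

lemma nn_int01:
  fixes h :: "real \<Rightarrow> real"
  assumes "continuous_on {0..1} h" "\<And>t. 0 \<le> h t"
  shows "(\<integral>\<^sup>+t. ennreal (h t) * indicator {0..1} t \<partial>lborel) = ennreal (integral {0..1} h)"
  using assms by (intro nn_integral_has_integral_lebesgue' integrable_integral integrable_continuous_interval) auto

lemma swap_trans:
  fixes Q :: "complex \<Rightarrow> real" and p q :: "real \<Rightarrow> real"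
  assumes [measurable]: "Q \<in> borel_measurable borel" "p \<in> borel_measurable borel" "q \<in> borel_measurable borel"
  shows "(\<integral>\<^sup>+y. (\<integral>\<^sup>+t. ennreal (Q (Complex (p t) (y + q t))) * indicator {0..1} t \<partial>lborel) \<partial>lborel)
       = (\<integral>\<^sup>+t. (\<integral>\<^sup>+v. ennreal (Q (Complex (p t) v)) \<partial>lborel) * indicator {0..1} t \<partial>lborel)"
proof -
  have "(\<integral>\<^sup>+y. (\<integral>\<^sup>+t. ennreal (Q (Complex (p t) (y + q t))) * indicator {0..1} t \<partial>lborel) \<partial>lborel)
      = (\<integral>\<^sup>+t. (\<integral>\<^sup>+y. ennreal (Q (Complex (p t) (y + q t))) * indicator {0..1} t \<partial>lborel) \<partial>lborel)"
    by (rule lborel_pair.Fubini') measurable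
  also have "\<dots> = (\<integral>\<^sup>+t. (\<integral>\<^sup>+v. ennreal (Q (Complex (p t) v)) \<partial>lborel) * indicator {0..1} t \<partial>lborel)"
  proof (rule nn_integral_cong)
    fix t
    show "(\<integral>\<^sup>+y. ennreal (Q (Complex (p t) (y + q t))) * indicator {0..1} t \<partial>lborel)
        = (\<integral>\<^sup>+v. ennreal (Q (Complex (p t) v)) \<partial>lborel) * indicator {0..1} t"
      by (subst nn_integral_multc) (auto intro!: arg_cong2[where f="(*)"] nn_trans)
  qed
  finally show ?thesis .
qed

lemma key:
  fixes Q :: "complex \<Rightarrow> real" and x :: real
  assumes contQ: "continuous_on UNIV Q" and nonneg: "\<And>w. 0 \<le> Q w"
  and bound: "\<And>y s. s > 0 \<Longrightarrow> Q (Complex x y) \<le> (1/pi) *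
     (integral {0..1} (\<lambda>t. Q (Complex (x - s + 2 * s * t) (y - s))) +
      (integral {0..1} (\<lambda>t. Q (Complex (x + s) (y - s + 2 * s * t))) +
      (integral {0..1} (\<lambda>t. Q (Complex (x + s - 2 * s * t) (y + s))) +
       integral {0..1} (\<lambda>t. Q (Complex (x - s) (y + s - 2 * s * t))))))"
  and fin: "(\<integral>\<^sup>+u. (\<integral>\<^sup>+v. ennreal (Q (Complex u v) * exp (- 2 * u\<^sup>2)) \<partial>lborel) \<partial>lborel) < \<infinity>"
  shows "(\<integral>\<^sup>+y. ennreal (Q (Complex x y)) \<partial>lborel) < \<infinity>"
proof -
  have Qm[measurable]: "Q \<in> borel_measurable borel" using contQ by (rule borel_measurable_continuous_onI)
  define G where "G u = (\<integral>\<^sup>+v. ennreal (Q (Complex u v)) \<partial>lborel)" for u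
  have Gm[measurable]: "G \<in> borel_measurable borel" unfolding G_def by measurable
  define H where "H = (\<integral>\<^sup>+u. G u * indicator {x-1..x+1} u \<partial>lborel)"
  have H: "H < \<infinity>"
  proof -
    define C where "C = exp (2 * (\<bar>x\<bar>+1)\<^sup>2)"
    have "H \<le> (\<integral>\<^sup>+u. ennreal C * (ennreal (exp (- 2 * u\<^sup>2)) * G u) \<partial>lborel)"
      unfolding H_def
    proof (rule nn_integral_mono)
      fix u
      show "G u * indicator {x-1..x+1} u \<le> ennreal C * (ennreal (exp (- 2 * u\<^sup>2)) * G u)"
      proof (cases "u \<in> {x-1..x+1}")
        case True
        then have "\<bar>u\<bar> \<le> \<bar>x\<bar>+1" by auto
        then have "u\<^sup>2 \<le> (\<bar>x\<bar>+1)\<^sup>2" by (metis abs_ge_zero power2_abs power_mono)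
        then have "exp 0 \<le> C * exp (- 2 * u\<^sup>2)"
          unfolding C_def exp_add[symmetric] by simp
        then have "1 \<le> ennreal (C * exp (- 2 * u\<^sup>2))" by simp
        then have "1 * G u \<le> ennreal (C * exp (- 2 * u\<^sup>2)) * G u"
          by (rule mult_right_mono) simp
        then show ?thesis using True by (simp add: ennreal_mult C_def mult.assoc)
      next
        case False
        then show ?thesis by simp
      qed
    qed
    also have "\<dots> = ennreal C * (\<integral>\<^sup>+u. ennreal (exp (- 2 * u\<^sup>2)) * G u \<partial>lborel)"
      by (rule nn_integral_cmult) measurable
    also have "(\<integral>\<^sup>+u. ennreal (exp (- 2 * u\<^sup>2)) * G u \<partial>lborel)
        = (\<integral>\<^sup>+u. (\<integral>\<^sup>+v. ennreal (Q (Complex u v) * exp (- 2 * u\<^sup>2)) \<partial>lborel) \<partial>lborel)"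
      unfolding G_def
      by (intro nn_integral_cong, subst nn_integral_cmult[symmetric])
         (auto simp: ennreal_mult nonneg mult.commute intro!: nn_integral_cong)
    finally have le: "H \<le> ennreal C * (\<integral>\<^sup>+u. (\<integral>\<^sup>+v. ennreal (Q (Complex u v) * exp (- 2 * u\<^sup>2)) \<partial>lborel) \<partial>lborel)" .
    have "ennreal C * (\<integral>\<^sup>+u. (\<integral>\<^sup>+v. ennreal (Q (Complex u v) * exp (- 2 * u\<^sup>2)) \<partial>lborel) \<partial>lborel) < \<infinity>"
      using fin by (simp add: ennreal_mult_less_top)
    with le show ?thesis by (rule order_le_less_trans)
  qed
  have A1: "(\<integral>\<^sup>+t. G (x + 1 * t) * indicator {0..1} t \<partial>lborel) \<le> H"
    using nn_aff[OF Gm, of 1 x] unfolding H_def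
    by (auto intro!: nn_integral_mono simp: indicator_def)
  have A2: "(\<integral>\<^sup>+t. G (x + (-1) * t) * indicator {0..1} t \<partial>lborel) \<le> H"
    using nn_aff[OF Gm, of "-1" x] unfolding H_def
    by (auto intro!: nn_integral_mono simp: indicator_def)
  have "(\<integral>\<^sup>+t. (G (x + 1 * t) + G (x + (-1) * t)) * indicator {0..1} t \<partial>lborel) < \<infinity>"
  proof -
    have "(\<integral>\<^sup>+t. (G (x + 1 * t) + G (x + (-1) * t)) * indicator {0..1} t \<partial>lborel)
       = (\<integral>\<^sup>+t. G (x + 1 * t) * indicator {0..1} t \<partial>lborel) + (\<integral>\<^sup>+t. G (x + (-1) * t) * indicator {0..1} t \<partial>lborel)"
      by (subst nn_integral_add[symmetric]) (auto simp: distrib_right)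
    also have "\<dots> \<le> H + H" using A1 A2 by (rule add_mono)
    finally show ?thesis using H by (simp add: order_le_less_trans)
  qed
  then have "AE t in lborel. (G (x + 1 * t) + G (x + (-1) * t)) * indicator {0..1} t \<noteq> \<infinity>"
    by (intro nn_integral_PInf_AE) auto
  then obtain N where N: "{t \<in> space lborel. \<not> ((G (x + 1 * t) + G (x + (-1) * t)) * indicator {0..1} t \<noteq> \<infinity>)} \<subseteq> N"
    "emeasure lborel N = 0" "N \<in> sets lborel"
    by (rule AE_E)
  obtain s where s: "0 < s" "s \<le> 1" "G (x + s) < \<infinity>" "G (x - s) < \<infinity>"
  proof (rule ccontr)
    assume nex: "\<not> thesis"
    have "{0<..1} \<subseteq> N"
    proof
      fix t :: real assume t: "t \<in> {0<..1}"
      have "\<not> (G (x + t) < \<infinity> \<and> G (x - t) < \<infinity>)" using nex that t by auto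
      then have "(G (x + 1 * t) + G (x + (-1) * t)) * indicator {0..1} t = \<infinity>"
        using t by (auto simp: indicator_def top_unique less_top[symmetric])
      then show "t \<in> N" using N(1) by auto
    qed
    then have "emeasure lborel {0<..(1::real)} \<le> emeasure lborel N"
      using N(3) by (intro emeasure_mono) auto
    then show False using N(2) by simp
  qed
  define S1 where "S1 y = (\<integral>\<^sup>+t. ennreal (Q (Complex (x - s + 2 * s * t) (y + (- s)))) * indicator {0..1} t \<partial>lborel)" for y
  define S2 where "S2 y = (\<integral>\<^sup>+t. ennreal (Q (Complex (x + s) (y + (2 * s * t - s)))) * indicator {0..1} t \<partial>lborel)" for y
  define S3 where "S3 y = (\<integral>\<^sup>+t. ennreal (Q (Complex (x + s - 2 * s * t) (y + s))) * indicator {0..1} t \<partial>lborel)" for y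
  define S4 where "S4 y = (\<integral>\<^sup>+t. ennreal (Q (Complex (x - s) (y + (s - 2 * s * t)))) * indicator {0..1} t \<partial>lborel)" for y
  have pt: "ennreal (Q (Complex x y)) \<le> ennreal (1/pi) * (S1 y + (S2 y + (S3 y + S4 y)))" for y
  proof -
    define h1 where "h1 t = Q (Complex (x - s + 2 * s * t) (y + (- s)))" for t
    define h2 where "h2 t = Q (Complex (x + s) (y + (2 * s * t - s)))" for t
    define h3 where "h3 t = Q (Complex (x + s - 2 * s * t) (y + s))" for t
    define h4 where "h4 t = Q (Complex (x - s) (y + (s - 2 * s * t)))" for t
    have c1: "continuous_on {0..1} h1" unfolding h1_def by (intro continuous_on_Complex_comp[OF contQ] continuous_intros)
    have c2: "continuous_on {0..1} h2" unfolding h2_def by (intro continuous_on_Complex_comp[OF contQ] continuous_intros)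
    have c3: "continuous_on {0..1} h3" unfolding h3_def by (intro continuous_on_Complex_comp[OF contQ] continuous_intros)
    have c4: "continuous_on {0..1} h4" unfolding h4_def by (intro continuous_on_Complex_comp[OF contQ] continuous_intros)
    have e1: "S1 y = ennreal (integral {0..1} h1)" unfolding S1_def h1_def[symmetric] by (rule nn_int01[OF c1]) (simp add: h1_def nonneg)
    have e2: "S2 y = ennreal (integral {0..1} h2)" unfolding S2_def h2_def[symmetric] by (rule nn_int01[OF c2]) (simp add: h2_def nonneg)
    have e3: "S3 y = ennreal (integral {0..1} h3)" unfolding S3_def h3_def[symmetric] by (rule nn_int01[OF c3]) (simp add: h3_def nonneg)
    have e4: "S4 y = ennreal (integral {0..1} h4)" unfolding S4_def h4_def[symmetric] by (rule nn_int01[OF c4]) (simp add: h4_def nonneg)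
    have n1: "0 \<le> integral {0..1} h1" by (rule integral_nonneg[OF integrable_continuous_interval[OF c1]]) (simp add: h1_def nonneg)
    have n2: "0 \<le> integral {0..1} h2" by (rule integral_nonneg[OF integrable_continuous_interval[OF c2]]) (simp add: h2_def nonneg)
    have n3: "0 \<le> integral {0..1} h3" by (rule integral_nonneg[OF integrable_continuous_interval[OF c3]]) (simp add: h3_def nonneg)
    have n4: "0 \<le> integral {0..1} h4" by (rule integral_nonneg[OF integrable_continuous_interval[OF c4]]) (simp add: h4_def nonneg)
    have f1: "(\<lambda>t. Q (Complex (x - s + 2 * s * t) (y - s))) = h1" by (simp add: fun_eq_iff h1_def)
    have f2: "(\<lambda>t. Q (Complex (x + s) (y - s + 2 * s * t))) = h2" by (simp add: fun_eq_iff h2_def algebra_simps)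
    have f3: "(\<lambda>t. Q (Complex (x + s - 2 * s * t) (y + s))) = h3" by (simp add: fun_eq_iff h3_def)
    have f4: "(\<lambda>t. Q (Complex (x - s) (y + s - 2 * s * t))) = h4" by (simp add: fun_eq_iff h4_def algebra_simps)
    have "Q (Complex x y) \<le> (1/pi) * (integral {0..1} h1 + (integral {0..1} h2 + (integral {0..1} h3 + integral {0..1} h4)))"
      using bound[OF s(1), of y] unfolding f1 f2 f3 f4 .
    then have "ennreal (Q (Complex x y)) \<le> ennreal ((1/pi) * (integral {0..1} h1 + (integral {0..1} h2 + (integral {0..1} h3 + integral {0..1} h4))))"
      by (rule ennreal_leI)
    also have "\<dots> = ennreal (1/pi) * (S1 y + (S2 y + (S3 y + S4 y)))"
      unfolding e1 e2 e3 e4 using n1 n2 n3 n4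
      by (subst ennreal_mult) (auto simp: ennreal_plus[symmetric] simp del: ennreal_plus)
    finally show ?thesis .
  qed
  have cnz: "2 * s \<noteq> 0" "- 2 * s \<noteq> 0" using s by auto
  have I1: "(\<integral>\<^sup>+y. S1 y \<partial>lborel) < \<infinity>"
  proof -
    have eq: "(\<integral>\<^sup>+y. S1 y \<partial>lborel) = (\<integral>\<^sup>+t. G (x - s + 2 * s * t) * indicator {0..1} t \<partial>lborel)"
      unfolding S1_def[abs_def] G_def by (rule swap_trans) measurable
    have "ennreal \<bar>2 * s\<bar> * (\<integral>\<^sup>+t. G ((x - s) + (2 * s) * t) * indicator {0..1} t \<partial>lborel) \<le> H"
      unfolding nn_aff[OF Gm, of "2 * s" "x - s", OF cnz(1)] H_def using s
      by (intro nn_integral_mono) (auto simp: indicator_def min_def max_def)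
    then have lt: "ennreal \<bar>2 * s\<bar> * (\<integral>\<^sup>+y. S1 y \<partial>lborel) < \<infinity>" using H eq by (simp add: order_le_less_trans)
    show ?thesis
    proof (rule ccontr)
      assume "\<not> ?thesis"
      then have "(\<integral>\<^sup>+y. S1 y \<partial>lborel) = \<infinity>" by (simp add: not_less top_unique)
      moreover have "ennreal \<bar>2 * s\<bar> \<noteq> 0" using s(1) by simp
      ultimately show False using lt by (simp add: ennreal_mult_top)
    qed
  qed
  have I3: "(\<integral>\<^sup>+y. S3 y \<partial>lborel) < \<infinity>"
  proof -
    have eq0: "(\<integral>\<^sup>+y. S3 y \<partial>lborel) = (\<integral>\<^sup>+t. G (x + s - 2 * s * t) * indicator {0..1} t \<partial>lborel)"
      unfolding S3_def[abs_def] G_def by (rule swap_trans) measurable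
    have fe: "(\<lambda>t. G (x + s - 2 * s * t) * indicator {0..1} t) = (\<lambda>t. G ((x + s) + (- 2 * s) * t) * indicator {0..1} t)"
      by (rule ext) (simp only: diff_conv_add_uminus mult_minus_left)
    have eq: "(\<integral>\<^sup>+y. S3 y \<partial>lborel) = (\<integral>\<^sup>+t. G ((x + s) + (- 2 * s) * t) * indicator {0..1} t \<partial>lborel)"
      using eq0 unfolding fe .
    have "ennreal \<bar>- 2 * s\<bar> * (\<integral>\<^sup>+t. G ((x + s) + (- 2 * s) * t) * indicator {0..1} t \<partial>lborel) \<le> H"
      unfolding nn_aff[OF Gm, of "- 2 * s" "x + s", OF cnz(2)] H_def using s
      by (intro nn_integral_mono) (auto simp: indicator_def min_def max_def)
    then have lt: "ennreal \<bar>- 2 * s\<bar> * (\<integral>\<^sup>+y. S3 y \<partial>lborel) < \<infinity>" using H eq by (simp add: order_le_less_trans)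
    show ?thesis
    proof (rule ccontr)
      assume "\<not> ?thesis"
      then have "(\<integral>\<^sup>+y. S3 y \<partial>lborel) = \<infinity>" by (simp add: not_less top_unique)
      moreover have "ennreal \<bar>- 2 * s\<bar> \<noteq> 0" using s(1) by simp
      ultimately show False using lt by (simp add: ennreal_mult_top)
    qed
  qed
  have I2: "(\<integral>\<^sup>+y. S2 y \<partial>lborel) < \<infinity>"
  proof -
    have "(\<integral>\<^sup>+y. S2 y \<partial>lborel) = (\<integral>\<^sup>+t. G (x + s) * indicator {0..1} (t::real) \<partial>lborel)"
      unfolding S2_def[abs_def] G_def by (rule swap_trans[where p="\<lambda>t. x + s" and q="\<lambda>t. 2 * s * t - s"]) measurable
    also have "\<dots> = G (x + s)" by (simp add: nn_integral_cmult_indicator)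
    finally show ?thesis using s by simp
  qed
  have I4: "(\<integral>\<^sup>+y. S4 y \<partial>lborel) < \<infinity>"
  proof -
    have "(\<integral>\<^sup>+y. S4 y \<partial>lborel) = (\<integral>\<^sup>+t. G (x - s) * indicator {0..1} (t::real) \<partial>lborel)"
      unfolding S4_def[abs_def] G_def by (rule swap_trans[where p="\<lambda>t. x - s" and q="\<lambda>t. s - 2 * s * t"]) measurable
    also have "\<dots> = G (x - s)" by (simp add: nn_integral_cmult_indicator)
    finally show ?thesis using s by simp
  qed
  have [measurable]: "S1 \<in> borel_measurable borel" "S2 \<in> borel_measurable borel"
    "S3 \<in> borel_measurable borel" "S4 \<in> borel_measurable borel"
    unfolding S1_def S2_def S3_def S4_def by measurable
  have "(\<integral>\<^sup>+y. ennreal (Q (Complex x y)) \<partial>lborel) \<le> (\<integral>\<^sup>+y. ennreal (1/pi) * (S1 y + (S2 y + (S3 y + S4 y))) \<partial>lborel)"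
    by (intro nn_integral_mono pt)
  also have "\<dots> = ennreal (1/pi) * ((\<integral>\<^sup>+y. S1 y \<partial>lborel) + ((\<integral>\<^sup>+y. S2 y \<partial>lborel) + ((\<integral>\<^sup>+y. S3 y \<partial>lborel) + (\<integral>\<^sup>+y. S4 y \<partial>lborel))))"
    by (simp add: nn_integral_cmult nn_integral_add)
  also have "\<dots> < \<infinity>" using I1 I2 I3 I4 by (simp add: ennreal_mult_less_top)
  finally show ?thesis .
qed


theorem lemma4p1:
  fixes \<phi> :: "complex \<Rightarrow> complex" and x :: real
  assumes "\<phi> \<in> Bargmann"
  shows "integrable lborel (\<lambda>y::real. (cmod (\<phi> (Complex x y)))\<^sup>2 * exp (- y\<^sup>2))"
proof -
  have holphi: "\<phi> holomorphic_on UNIV" and intg: "integrable lborel (\<lambda>z::complex. (cmod (\<phi> z))\<^sup>2 * exp (- (cmod z)\<^sup>2))"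
    using assms by (auto simp: Bargmann_def)
  have contphi: "continuous_on UNIV \<phi>" using holphi holomorphic_on_imp_continuous_on by blast
  define \<psi> where "\<psi> w = \<phi> w * exp (w\<^sup>2 / 2)" for w
  have holpsi: "(\<lambda>w. \<psi> w ^ 2) holomorphic_on UNIV"
    unfolding \<psi>_def by (intro holomorphic_intros holphi) auto
  define Q where "Q w = cmod ((\<lambda>w. \<psi> w ^ 2) w)" for w
  have Qid: "Q (Complex u v) = (cmod (\<phi> (Complex u v)))\<^sup>2 * exp (u\<^sup>2 - v\<^sup>2)" for u v
  proof -
    have re: "Re ((Complex u v)\<^sup>2) = u\<^sup>2 - v\<^sup>2" by (simp add: power2_eq_square)
    have ex: "(exp ((u\<^sup>2 - v\<^sup>2) / 2))\<^sup>2 = exp (u\<^sup>2 - v\<^sup>2)"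
      by (simp add: power2_eq_square exp_add[symmetric])
    show ?thesis
      unfolding Q_def \<psi>_def by (simp add: norm_mult norm_power norm_exp_eq_Re re power_mult_distrib ex)
  qed
  have contQ: "continuous_on UNIV Q"
    unfolding Q_def \<psi>_def by (intro continuous_intros continuous_on_compose2[OF contphi]) auto
  have bound: "Q (Complex x y) \<le> (1/pi) *
     (integral {0..1} (\<lambda>t. Q (Complex (x - s + 2 * s * t) (y - s))) +
      (integral {0..1} (\<lambda>t. Q (Complex (x + s) (y - s + 2 * s * t))) +
      (integral {0..1} (\<lambda>t. Q (Complex (x + s - 2 * s * t) (y + s))) +
       integral {0..1} (\<lambda>t. Q (Complex (x - s) (y + s - 2 * s * t))))))" if "s > 0" for y s
    unfolding Q_def by (rule rect_bound[OF holpsi that])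
  have F[measurable]: "(\<lambda>z::complex. (cmod (\<phi> z))\<^sup>2 * exp (- (cmod z)\<^sup>2)) \<in> borel_measurable borel"
    using intg by (simp add: borel_measurable_integrable)
  have "(\<integral>\<^sup>+z. ennreal (norm ((cmod (\<phi> z))\<^sup>2 * exp (- (cmod z)\<^sup>2))) \<partial>lborel) < \<infinity>"
    using intg by (simp add: integrable_iff_bounded)
  also have "(\<integral>\<^sup>+z. ennreal (norm ((cmod (\<phi> z))\<^sup>2 * exp (- (cmod z)\<^sup>2))) \<partial>lborel)
      = (\<integral>\<^sup>+z. ennreal ((cmod (\<phi> z))\<^sup>2 * exp (- (cmod z)\<^sup>2)) \<partial>(distr (lborel \<Otimes>\<^sub>M lborel) borel (\<lambda>(a,b). Complex a b)))"
    by (subst lborel_complex[symmetric]) simp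
  also have "\<dots> = (\<integral>\<^sup>+p. ennreal ((cmod (\<phi> (Complex (fst p) (snd p))))\<^sup>2 * exp (- (cmod (Complex (fst p) (snd p)))\<^sup>2)) \<partial>(lborel \<Otimes>\<^sub>M lborel))"
    by (subst nn_integral_distr) (auto simp: case_prod_beta)
  also have "\<dots> = (\<integral>\<^sup>+u. (\<integral>\<^sup>+v. ennreal ((cmod (\<phi> (Complex u v)))\<^sup>2 * exp (- (cmod (Complex u v))\<^sup>2)) \<partial>lborel) \<partial>lborel)"
    by (subst lborel.nn_integral_fst[symmetric]) auto
  also have "\<dots> = (\<integral>\<^sup>+u. (\<integral>\<^sup>+v. ennreal (Q (Complex u v) * exp (- 2 * u\<^sup>2)) \<partial>lborel) \<partial>lborel)"
  proof (intro nn_integral_cong arg_cong[where f=ennreal])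
    fix u v :: real
    have "exp (u\<^sup>2 - v\<^sup>2) * exp (- 2 * u\<^sup>2) = exp (- (cmod (Complex u v))\<^sup>2)"
      by (simp add: exp_add[symmetric] complex_norm)
    then show "(cmod (\<phi> (Complex u v)))\<^sup>2 * exp (- (cmod (Complex u v))\<^sup>2) = Q (Complex u v) * exp (- 2 * u\<^sup>2)"
      by (simp add: Qid mult.assoc)
  qed
  finally have fin: "(\<integral>\<^sup>+u. (\<integral>\<^sup>+v. ennreal (Q (Complex u v) * exp (- 2 * u\<^sup>2)) \<partial>lborel) \<partial>lborel) < \<infinity>" .
  have K: "(\<integral>\<^sup>+y. ennreal (Q (Complex x y)) \<partial>lborel) < \<infinity>"
    by (rule key[OF contQ _ bound fin]) (simp add: Q_def)
  have Qm[measurable]: "Q \<in> borel_measurable borel" using contQ by (rule borel_measurable_continuous_onI)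
  have eqf: "(cmod (\<phi> (Complex x y)))\<^sup>2 * exp (- y\<^sup>2) = exp (- x\<^sup>2) * Q (Complex x y)" for y
  proof -
    have "exp (- x\<^sup>2) * exp (x\<^sup>2 - y\<^sup>2) = exp (- y\<^sup>2)" by (simp add: exp_add[symmetric])
    then show ?thesis by (simp add: Qid mult.commute mult.left_commute)
  qed
  show ?thesis
    unfolding eqf
  proof (subst integrable_iff_bounded, intro conjI)
    show "(\<lambda>y. exp (- x\<^sup>2) * Q (Complex x y)) \<in> borel_measurable lborel" by measurable
    have "(\<integral>\<^sup>+y. ennreal (norm (exp (- x\<^sup>2) * Q (Complex x y))) \<partial>lborel)
        = (\<integral>\<^sup>+y. ennreal (exp (- x\<^sup>2)) * ennreal (Q (Complex x y)) \<partial>lborel)"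
      by (intro nn_integral_cong) (simp add: Q_def ennreal_mult)
    also have "\<dots> = ennreal (exp (- x\<^sup>2)) * (\<integral>\<^sup>+y. ennreal (Q (Complex x y)) \<partial>lborel)"
      by (rule nn_integral_cmult) measurable
    also have "\<dots> < \<infinity>" using K by (simp add: ennreal_mult_less_top)
    finally show "(\<integral>\<^sup>+y. ennreal (norm (exp (- x\<^sup>2) * Q (Complex x y))) \<partial>lborel) < \<infinity>" .
  qed
qed

end
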